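(* Let $k,r,h$ be positive integers such that $\ell=\frac{k+h}{r}$ is an integer, and let $a,b$ be positive integers with $\mathbb{F}_{2^a}\subseteq\mathbb{F}_{2^b}$. Suppose there is a set $S_1=\{\xi_1,\ldots,\xi_{r+1}\}\subseteq\mathbb{F}_{2^a}$ of size $r+1$ which is $h$-wise weakly independent over $\mathbb{F}_2$ if $h$ is even, and $(h+1)$-wise weakly independent over $\mathbb{F}_2$ if $h$ is odd. Suppose further there is a set $S_2=\{\lambda_1,\ldots,\lambda_\ell\}\subseteq\mathbb{F}_{2^b}$ of size $\ell$ that is $h$-wise independent over $\mathbb{F}_{2^a}$. Set $\alpha_{i,s}=\lambda_i\xi_s$ for $i\in[\ell]$, $s\in[r+1]$. Then the code $\mathcal{C}\subseteq\mathbb{F}_{2^b}^{\ell(r+1)}$ consisting of all $(x_{i,s})_{i\in[\ell],s\in[r+1]}$ satisfying $\sum_{i=1}^{\ell}\sum_{s=1}^{r+1}\alpha_{i,s}^{2^{j-1}}x_{i,s}=0$ for $j=1,\ldots,h$ and $\sum_{s=1}^{r+1}x_{i,s}=0$ for $i=1,\ldots,\ell$ is a maximally recoverable local $(k,r,h)$-code over $\mathbb{F}_{2^b}$, whose local groups are the sets $\{(i,s):s\in[r+1]\}$, $i\in[\ell]$.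
   Context: A set $S\subseteq\mathbb{F}$ is $t$-wise weakly independent over $\mathbb{F}_2$ if no subset $T\subseteq S$ with $2\le|T|\le t$ has sum of its elements equal to $0$ (such a set may contain $0$). A set $S\subseteq\mathbb{F}$ is $t$-wise independent over a subfield $\mathbb{F}'$ if every subset of size at most $t$ is linearly independent over $\mathbb{F}'$. For positive integers $k,r,h$ with $r\mid(k+h)$, a local $(k,r,h)$-code over a finite field $\mathbb{F}$ is a linear systematic code of dimension $k$ and length $k+h+\frac{k+h}{r}$ consisting of $k$ data symbols, $h$ heavy parity symbols (each a linear combination of all data symbols), and, after partitioning the $k+h$ data and heavy symbols into groups of size $r$, one local parity per group equal to the sum of the group's symbols; a local group is such a group plus its local parity. The code is maximally recoverable if for every set $E$ of coordinates containing exactly one coordinate from each local group, puncturing the code in $E$ yields a maximum distance separable $[k+h,k]$ code (minimum distance $h+1$). *)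

theory Defs
  imports Main
begin

definition is_subfield :: "'f::field set \<Rightarrow> bool" where
  "is_subfield K \<longleftrightarrow> 0 \<in> K \<and> 1 \<in> K \<and>
     (\<forall>x\<in>K. \<forall>y\<in>K. x + y \<in> K \<and> x * y \<in> K) \<and>
     (\<forall>x\<in>K. - x \<in> K) \<and> (\<forall>x\<in>K. x \<noteq> 0 \<longrightarrow> inverse x \<in> K)"

definition weakly_indep :: "'f::field set \<Rightarrow> nat \<Rightarrow> bool" where
  "weakly_indep S t \<longleftrightarrow>
     (\<forall>T. T \<subseteq> S \<and> 2 \<le> card T \<and> card T \<le> t \<longrightarrow> (\<Sum>x\<in>T. x) \<noteq> 0)"

definition lin_indep_over :: "'f::field set \<Rightarrow> 'f set \<Rightarrow> bool" where
  "lin_indep_over K T \<longleftrightarrow>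
     (\<forall>c. (\<forall>x\<in>T. c x \<in> K) \<and> (\<Sum>x\<in>T. c x * x) = 0 \<longrightarrow> (\<forall>x\<in>T. c x = 0))"

definition t_wise_indep_over :: "'f::field set \<Rightarrow> 'f set \<Rightarrow> nat \<Rightarrow> bool" where
  "t_wise_indep_over K S t \<longleftrightarrow>
     (\<forall>T. T \<subseteq> S \<and> card T \<le> t \<longrightarrow> lin_indep_over K T)"

definition lin_code :: "('i \<Rightarrow> 'f::field) set \<Rightarrow> 'i set \<Rightarrow> bool" where
  "lin_code C A \<longleftrightarrow> finite A \<and> (\<forall>c\<in>C. \<forall>j. j \<notin> A \<longrightarrow> c j = 0) \<and> (\<lambda>_. 0) \<in> C \<and>
     (\<forall>c\<in>C. \<forall>d\<in>C. (\<lambda>j. c j + d j) \<in> C) \<and> (\<forall>a. \<forall>c\<in>C. (\<lambda>j. a * c j) \<in> C)"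

definition systematic :: "('i \<Rightarrow> 'f::field) set \<Rightarrow> 'i set \<Rightarrow> bool" where
  "systematic C D \<longleftrightarrow> (\<forall>v. \<exists>!c. c \<in> C \<and> (\<forall>j\<in>D. c j = v j))"

definition weight :: "'i set \<Rightarrow> ('i \<Rightarrow> 'f::zero) \<Rightarrow> nat" where
  "weight A c = card {j\<in>A. c j \<noteq> 0}"

definition min_dist_is :: "('i \<Rightarrow> 'f::zero) set \<Rightarrow> 'i set \<Rightarrow> nat \<Rightarrow> bool" where
  "min_dist_is C A d \<longleftrightarrow>
     (\<forall>c\<in>C. c \<noteq> (\<lambda>_. 0) \<longrightarrow> d \<le> weight A c) \<and>
     (\<exists>c\<in>C. c \<noteq> (\<lambda>_. 0) \<and> weight A c = d)"

definition mds_code :: "('i \<Rightarrow> 'f::field) set \<Rightarrow> 'i set \<Rightarrow> nat \<Rightarrow> nat \<Rightarrow> bool" where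
  "mds_code C A n kk \<longleftrightarrow> lin_code C A \<and> card A = n \<and>
     (\<exists>D. D \<subseteq> A \<and> card D = kk \<and> systematic C D) \<and> min_dist_is C A (n - kk + 1)"

definition local_code :: "('i \<Rightarrow> 'f::field) set \<Rightarrow> 'i set \<Rightarrow> (nat \<Rightarrow> 'i set) \<Rightarrow> nat \<Rightarrow> nat \<Rightarrow> nat \<Rightarrow> nat \<Rightarrow> bool" where
  "local_code C A G l k r h \<longleftrightarrow>
     lin_code C A \<and> A = (\<Union>i<l. G i) \<and> card A = k + h + l \<and>
     (\<forall>i<l. \<forall>i'<l. i \<noteq> i' \<longrightarrow> G i \<inter> G i' = {}) \<and>
     (\<forall>i<l. card (G i) = r + 1) \<and>
     (\<exists>p D. (\<forall>i<l. p i \<in> G i) \<and> D \<subseteq> A - p ` {..<l} \<and> card D = k \<and> systematic C D \<and>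
        (\<forall>c\<in>C. \<forall>i<l. c (p i) = (\<Sum>j\<in>G i - {p i}. c j)))"

definition puncture :: "('i \<Rightarrow> 'f::zero) set \<Rightarrow> 'i set \<Rightarrow> ('i \<Rightarrow> 'f) set" where
  "puncture C E = (\<lambda>c j. if j \<in> E then 0 else c j) ` C"

definition max_recoverable :: "('i \<Rightarrow> 'f::field) set \<Rightarrow> 'i set \<Rightarrow> (nat \<Rightarrow> 'i set) \<Rightarrow> nat \<Rightarrow> nat \<Rightarrow> nat \<Rightarrow> nat \<Rightarrow> bool" where
  "max_recoverable C A G l k r h \<longleftrightarrow> local_code C A G l k r h \<and>
     (\<forall>E. E \<subseteq> A \<and> (\<forall>i<l. card (E \<inter> G i) = 1) \<longrightarrow>
        mds_code (puncture C E) (A - E) (k + h) k)"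

end

theory Submission
  imports Defs "HOL-Number_Theory.Residues" "HOL-Computational_Algebra.Polynomial" "HOL-Library.FuncSet"
begin


lemma c2_neg: assumes "(1::'f::field)+1 = 0" shows "- (x::'f) = x"
proof -
  have "x + x = (1+1)*x" by (simp add: distrib_right)
  hence "x + x = 0" using assms by simp
  thus ?thesis by (metis add_eq_0_iff)
qed

lemma c2_add_self: assumes "(1::'f::field)+1 = 0" shows "(x::'f) + x = 0"
  by (metis assms c2_neg add_eq_0_iff)

lemma c2_diff: assumes "(1::'f::field)+1 = 0" shows "(x::'f) - y = x + y"
  using c2_neg[OF assms, of y] by (metis diff_conv_add_uminus)

lemma frob: assumes "(1::'f::field)+1 = 0" shows "((x::'f) + y)^(2^n) = x^(2^n) + y^(2^n)"
proof (induction n)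
  case 0 then show ?case by simp
next
  case (Suc n)
  have e: "\<And>z::'f. z^(2^Suc n) = (z^(2^n))^2" by (simp add: power_mult[symmetric] mult.commute)
  have sq: "\<And>u v::'f. (u+v)^2 = u^2 + v^2"
  proof -
    fix u v :: 'f
    have "(u+v)^2 = u^2 + v^2 + (u*v + u*v)" by (simp add: power2_eq_square algebra_simps)
    thus "(u+v)^2 = u^2 + v^2" using c2_add_self[OF assms] by simp
  qed
  show ?case unfolding e Suc sq ..
qed

lemma c2_sum_ind:
  assumes c: "(1::'f::field)+1 = 0" and fin: "finite S"
    and ind: "\<forall>T\<subseteq>S. T \<noteq> {} \<longrightarrow> sum (\<beta>::'i\<Rightarrow>'f) T \<noteq> 0"
  shows "inj_on (sum \<beta>) (Pow S)"
proof (rule inj_onI)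
  fix T T' assume T: "T \<in> Pow S" and T': "T' \<in> Pow S" and eq: "sum \<beta> T = sum \<beta> T'"
  have fT: "finite T" "finite T'" using T T' fin finite_subset by auto
  have a: "sum \<beta> T = sum \<beta> (T - T') + sum \<beta> (T \<inter> T')"
    using sum.Int_Diff[OF fT(1), of \<beta> T'] by (simp add: add.commute)
  have b: "sum \<beta> T' = sum \<beta> (T' - T) + sum \<beta> (T \<inter> T')"
    using sum.Int_Diff[OF fT(2), of \<beta> T] by (simp add: add.commute Int_commute)
  have "sum \<beta> (T - T') = sum \<beta> (T' - T)" using a b eq by simp
  hence "sum \<beta> (T - T') + sum \<beta> (T' - T) = 0" using c2_add_self[OF c] by simp
  hence z: "sum \<beta> ((T - T') \<union> (T' - T)) = 0"
    using fT by (subst sum.union_disjoint) auto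
  have "(T - T') \<union> (T' - T) \<subseteq> S" using T T' by auto
  hence "(T - T') \<union> (T' - T) = {}" using ind z by blast
  thus "T = T'" by blast
qed

lemma moore_rows:
  fixes \<beta> :: "'i \<Rightarrow> 'f::{field,finite}"
  assumes c: "(1::'f)+1 = 0" and fin: "finite S"
    and ind: "\<forall>T\<subseteq>S. T \<noteq> {} \<longrightarrow> sum \<beta> T \<noteq> 0"
    and eq: "\<forall>m\<in>S. (\<Sum>j\<in>{1..card S}. d j * \<beta> m ^ (2^(j-1))) = 0"
  shows "\<forall>j\<in>{1..card S}. d j = 0"
proof (cases "card S = 0")
  case True then show ?thesis by simp
next
  case False
  define n where "n = card S"
  have n1: "n \<ge> 1" using False n_def by simp
  define L where "L = (\<Sum>j\<in>{1..n}. monom (d j) (2^(j-1)))"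
  have pL: "poly L x = (\<Sum>j\<in>{1..n}. d j * x ^ (2^(j-1)))" for x
    unfolding L_def poly_sum poly_monom ..
  have add: "poly L (x + y) = poly L x + poly L y" for x y
    unfolding pL frob[OF c] by (simp add: distrib_left sum.distrib)
  have zeroS: "poly L (\<beta> m) = 0" if "m \<in> S" for m using eq that pL n_def by simp
  have zeroT: "T \<subseteq> S \<Longrightarrow> poly L (sum \<beta> T) = 0" for T
  proof -
    assume TS: "T \<subseteq> S"
    have "finite T" using TS fin finite_subset by auto
    thus ?thesis using TS
    proof (induction T rule: finite_induct)
      case empty
      show ?case unfolding pL by (intro sum.neutral ballI) (simp add: power_0_left)
    next
      case (insert x F)
      then show ?case using add zeroS by simp
    qed
  qed
  have L0: "L = 0"
  proof (rule ccontr)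
    assume nz: "L \<noteq> 0"
    have "degree L \<le> 2^(n-1)" unfolding L_def
      by (rule degree_sum_le) (auto intro: order.trans[OF degree_monom_le])
    also have "\<dots> < 2^n" using n1 by (simp add: power_strict_increasing)
    also have "2^n = card (sum \<beta> ` Pow S)"
      using card_image[OF c2_sum_ind[OF c fin ind]] card_Pow[OF fin] n_def by simp
    also have "\<dots> \<le> card {x. poly L x = 0}"
      by (rule card_mono) (auto intro: zeroT)
    also have "\<dots> \<le> degree L" by (rule card_poly_roots_bound[OF nz])
    finally show False by simp
  qed
  show ?thesis
  proof
    fix j assume j: "j \<in> {1..card S}"
    have "coeff L (2^(j-1)) = (\<Sum>i\<in>{1..n}. (if 2^(i-1) = (2::nat)^(j-1) then d i else 0))"
      unfolding L_def coeff_sum coeff_monom ..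
    also have "\<dots> = (\<Sum>i\<in>{1..n}. (if i = j then d i else 0))"
      by (rule sum.cong) (use j n_def in auto)
    also have "\<dots> = d j" using j n_def by simp
    finally show "d j = 0" using L0 by simp
  qed
qed

lemma moore:
  fixes \<beta> y :: "'i \<Rightarrow> 'f::{field,finite}"
  assumes c: "(1::'f)+1 = 0" and fin: "finite S" and cardS: "card S \<le> t"
    and ind: "\<forall>T\<subseteq>S. T \<noteq> {} \<longrightarrow> sum \<beta> T \<noteq> 0"
    and eq: "\<forall>j\<in>{1..t}. (\<Sum>m\<in>S. \<beta> m ^ (2^(j-1)) * y m) = 0"
  shows "\<forall>m\<in>S. y m = 0"
proof -
  define n where "n = card S"
  define X where "X = ({1..n} \<rightarrow>\<^sub>E (UNIV::'f set))"
  define Y where "Y = (S \<rightarrow>\<^sub>E (UNIV::'f set))"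
  define N where "N = (\<lambda>c::nat\<Rightarrow>'f. restrict (\<lambda>m. \<Sum>j\<in>{1..n}. c j * \<beta> m ^ (2^(j-1))) S)"
  have NY: "N ` X \<subseteq> Y" unfolding N_def Y_def by auto
  have inj: "inj_on N X"
  proof (rule inj_onI)
    fix c c' assume cX: "c \<in> X" and c'X: "c' \<in> X" and e: "N c = N c'"
    have "\<forall>m\<in>S. (\<Sum>j\<in>{1..card S}. (c j - c' j) * \<beta> m ^ (2^(j-1))) = 0"
    proof
      fix m assume m: "m \<in> S"
      have "N c m = N c' m" using e by simp
      hence "(\<Sum>j\<in>{1..n}. c j * \<beta> m ^ (2^(j-1))) = (\<Sum>j\<in>{1..n}. c' j * \<beta> m ^ (2^(j-1)))"
        using m unfolding N_def by simp
      thus "(\<Sum>j\<in>{1..card S}. (c j - c' j) * \<beta> m ^ (2^(j-1))) = 0"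
        unfolding n_def by (simp add: left_diff_distrib sum_subtractf)
    qed
    from moore_rows[OF c fin ind this] have "\<forall>j\<in>{1..n}. c j = c' j" unfolding n_def by simp
    thus "c = c'" using cX c'X unfolding X_def by (intro PiE_ext) auto
  qed
  have cXY: "card X = card Y" unfolding X_def Y_def using fin
    by (simp add: card_PiE n_def)
  have finY: "finite Y" unfolding Y_def using fin by (intro finite_PiE) auto
  have surj: "N ` X = Y"
    by (rule card_subset_eq[OF finY NY]) (simp add: card_image[OF inj] cXY)
  show ?thesis
  proof (rule ccontr)
    assume "\<not> (\<forall>m\<in>S. y m = 0)"
    then obtain m0 where m0: "m0 \<in> S" "y m0 \<noteq> 0" by blast
    define z where "z = restrict (\<lambda>m. if m = m0 then (1::'f) else 0) S"
    have "z \<in> Y" unfolding z_def Y_def by auto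
    then obtain c where cX: "c \<in> X" and cz: "N c = z" using surj by blast
    have "(\<Sum>m\<in>S. z m * y m) = (\<Sum>m\<in>S. if m = m0 then y m else 0)"
      by (rule sum.cong) (auto simp: z_def)
    hence "y m0 = (\<Sum>m\<in>S. z m * y m)" using m0 fin by simp
    also have "\<dots> = (\<Sum>m\<in>S. (\<Sum>j\<in>{1..n}. c j * \<beta> m ^ (2^(j-1))) * y m)"
      unfolding cz[symmetric] N_def by simp
    also have "\<dots> = (\<Sum>j\<in>{1..n}. c j * (\<Sum>m\<in>S. \<beta> m ^ (2^(j-1)) * y m))"
    proof -
      have "(\<Sum>m\<in>S. (\<Sum>j\<in>{1..n}. c j * \<beta> m ^ (2^(j-1))) * y m)
          = (\<Sum>m\<in>S. \<Sum>j\<in>{1..n}. c j * (\<beta> m ^ (2^(j-1)) * y m))"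
        by (simp add: sum_distrib_right mult.assoc)
      also have "\<dots> = (\<Sum>j\<in>{1..n}. \<Sum>m\<in>S. c j * (\<beta> m ^ (2^(j-1)) * y m))"
        by (rule sum.swap)
      also have "\<dots> = (\<Sum>j\<in>{1..n}. c j * (\<Sum>m\<in>S. \<beta> m ^ (2^(j-1)) * y m))"
        by (simp add: sum_distrib_left)
      finally show ?thesis .
    qed
    also have "\<dots> = 0" using eq cardS n_def by (intro sum.neutral) auto
    finally show False using m0 by simp
  qed
qed


lemma subfield_sum: assumes "is_subfield K" "\<forall>x\<in>U. f x \<in> K" shows "sum f U \<in> K"
proof (cases "finite U")
  case True thus ?thesis using assms(2)
    by (induction U rule: finite_induct) (use assms(1) in \<open>auto simp: is_subfield_def\<close>)
next
  case False thus ?thesis using assms(1) by (simp add: is_subfield_def)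
qed

lemma c2_of_nat: assumes "(1::'f::field)+1 = 0" shows "of_nat n = (if even n then 0 else (1::'f))"
proof (induction n)
  case 0 show ?case by simp
next
  case (Suc n) thus ?case using assms by (auto simp: add.commute)
qed

lemma char2: fixes b::nat assumes "card (UNIV::'f::{field,finite} set) = 2^b"
  shows "(1::'f)+1 = 0"
proof -
  have pos: "CHAR('f) > 0" by (rule finite_imp_CHAR_pos) simp
  have pr: "prime CHAR('f)" by (rule prime_CHAR_semidom[OF pos])
  have "CHAR('f) dvd 2^b" using CHAR_dvd_CARD[where 'a='f] assms by simp
  hence "CHAR('f) dvd 2" using pr prime_dvd_power by blast
  hence "CHAR('f) = 2" using pr using primes_dvd_imp_eq two_is_prime_nat by blast
  hence "of_nat 2 = (0::'f)" using of_nat_CHAR[where 'a='f] by metis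
  thus ?thesis by simp
qed

locale mrc =
  fixes k r h l :: nat and K :: "'f::{field,finite} set" and xi lam :: "nat \<Rightarrow> 'f"
  assumes c2: "(1::'f)+1 = 0"
  and kpos: "k>0" and lr: "l*r = k+h"
  and subf: "is_subfield K" and xiK: "\<forall>s<r+1. xi s \<in> K" and xinj: "inj_on xi {..<r+1}"
  and wi: "weakly_indep (xi ` {..<r+1}) (if even h then h else h+1)"
  and lind: "t_wise_indep_over K (lam ` {..<l}) h"
  and laminj: "inj_on lam {..<l}"
begin

definition A :: "(nat \<times> nat) set" where "A = {..<l} \<times> {..<r+1}"

definition C :: "(nat \<times> nat \<Rightarrow> 'f) set" where "C = {x :: nat \<times> nat \<Rightarrow> 'f.
        (\<forall>p. p \<notin> {..<l} \<times> {..<r+1} \<longrightarrow> x p = 0) \<and>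
        (\<forall>j\<in>{1..h}. (\<Sum>(i,s)\<in>{..<l} \<times> {..<r+1}. (lam i * xi s) ^ (2 ^ (j - 1)) * x (i, s)) = 0) \<and>
        (\<forall>i<l. (\<Sum>s<r+1. x (i, s)) = 0)}"

definition EE :: "(nat \<Rightarrow> nat) \<Rightarrow> (nat \<times> nat) set" where "EE e = (\<lambda>i. (i, e i)) ` {..<l}"
definition bet :: "(nat \<Rightarrow> nat) \<Rightarrow> nat \<times> nat \<Rightarrow> 'f" where
  "bet e = (\<lambda>(i,s). lam i * (xi s + xi (e i)))"
definition ext :: "(nat \<Rightarrow> nat) \<Rightarrow> (nat \<times> nat \<Rightarrow> 'f) \<Rightarrow> nat \<times> nat \<Rightarrow> 'f" where
  "ext e y = (\<lambda>(i,s). if i < l \<and> s < r+1 then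
      (if s = e i then (\<Sum>s'\<in>{..<r+1}-{e i}. y (i,s')) else y (i,s)) else 0)"

lemma finA: "finite A" unfolding A_def by simp

lemma BSigma: "A - EE e = Sigma {..<l} (\<lambda>i. {..<r+1} - {e i})"
  unfolding A_def EE_def by auto

definition al :: "nat \<times> nat \<Rightarrow> 'f" where "al = (\<lambda>(i,s). lam i * xi s)"

lemma sum_al: "(\<Sum>(i,s)\<in>X. (lam i * xi s) ^ q * x (i, s)) = (\<Sum>p\<in>X. al p ^ q * x p)"
  by (rule sum.cong) (auto simp: al_def)

lemma C_alt: "x \<in> C \<longleftrightarrow> (\<forall>p. p \<notin> A \<longrightarrow> x p = 0) \<and>
   (\<forall>j\<in>{1..h}. (\<Sum>p\<in>A. al p ^ (2^(j-1)) * x p) = 0) \<and> (\<forall>i<l. (\<Sum>s<r+1. x (i, s)) = 0)"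
  unfolding C_def A_def sum_al by simp

lemma C_add:
  assumes "c \<in> C" "d \<in> C" shows "(\<lambda>j. c j + d j) \<in> C"
  using assms unfolding C_alt by (simp add: distrib_left sum.distrib)

lemma C_smult:
  assumes "c \<in> C" shows "(\<lambda>j. a * c j) \<in> C"
  using assms unfolding C_alt by (simp add: sum_distrib_left[symmetric] mult.left_commute)

lemma C_zero: "(\<lambda>_. 0) \<in> C" unfolding C_def by auto

lemma C_diff: assumes "c \<in> C" "d \<in> C" shows "(\<lambda>j. c j - d j) \<in> C"
proof -
  have "(\<lambda>j. (-1) * d j) \<in> C" using C_smult[OF assms(2)] .
  from C_add[OF assms(1) this] show ?thesis by simp
qed

lemma local_eq: assumes "c \<in> C" "i < l" "e i < r+1"
  shows "c (i, e i) = (\<Sum>s\<in>{..<r+1}-{e i}. c (i,s))"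
proof -
  have "0 = (\<Sum>s<r+1. c (i,s))" using assms unfolding C_def by auto
  also have "\<dots> = c (i, e i) + (\<Sum>s\<in>{..<r+1}-{e i}. c (i,s))"
    by (rule sum.remove) (use assms(3) in auto)
  finally have "c (i, e i) = - (\<Sum>s\<in>{..<r+1}-{e i}. c (i,s))" by (simp add: eq_neg_iff_add_eq_0)
  thus ?thesis using c2_neg[OF c2] by simp
qed

lemma heavy_tr:
  assumes e: "\<forall>i<l. e i < r+1"
    and x: "\<forall>i<l. x (i, e i) = (\<Sum>s\<in>{..<r+1}-{e i}. x (i,s))"
    and that: "q = 2^n"
  shows "(\<Sum>(i,s)\<in>{..<l} \<times> {..<r+1}. (lam i * xi s) ^ q * x (i, s))
       = (\<Sum>m\<in>A - EE e. bet e m ^ q * x m)"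
proof -
  have "(\<Sum>(i,s)\<in>{..<l} \<times> {..<r+1}. (lam i * xi s) ^ q * x (i, s))
      = (\<Sum>i<l. \<Sum>s<r+1. (lam i * xi s) ^ q * x (i, s))"
    by (rule sum.cartesian_product[symmetric])
  also have "\<dots> = (\<Sum>i<l. \<Sum>s\<in>{..<r+1}-{e i}. bet e (i,s) ^ q * x (i, s))"
  proof (rule sum.cong[OF refl])
    fix i assume i: "i \<in> {..<l}"
    have ei: "e i \<in> {..<r+1}" using e i by auto
    have "(\<Sum>s<r+1. (lam i * xi s) ^ q * x (i, s))
       = (lam i * xi (e i)) ^ q * x (i, e i) + (\<Sum>s\<in>{..<r+1}-{e i}. (lam i * xi s) ^ q * x (i, s))"
      by (subst sum.remove[OF _ ei]) auto
    also have "\<dots> = (\<Sum>s\<in>{..<r+1}-{e i}. ((lam i * xi s) ^ q + (lam i * xi (e i)) ^ q) * x (i, s))"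
      using x i by (simp add: sum_distrib_left distrib_right sum.distrib)
    also have "\<dots> = (\<Sum>s\<in>{..<r+1}-{e i}. bet e (i,s) ^ q * x (i, s))"
      unfolding bet_def that frob[OF c2, symmetric] by (simp add: distrib_left)
    finally show "(\<Sum>s<r+1. (lam i * xi s) ^ q * x (i, s)) = (\<Sum>s\<in>{..<r+1}-{e i}. bet e (i,s) ^ q * x (i, s))" .
  qed
  also have "\<dots> = (\<Sum>m\<in>A - EE e. bet e m ^ q * x m)"
    unfolding BSigma by (subst sum.Sigma) (auto simp: split_def)
  finally show ?thesis .
qed

lemma C_heavy: assumes "c \<in> C" "\<forall>i<l. e i < r+1"
  shows "\<forall>j\<in>{1..h}. (\<Sum>m\<in>A - EE e. bet e m ^ (2^(j-1)) * c m) = 0"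
proof
  fix j assume j: "j \<in> {1..h}"
  have "0 = (\<Sum>(i,s)\<in>{..<l} \<times> {..<r+1}. (lam i * xi s) ^ (2 ^ (j - 1)) * c (i, s))"
    using assms j unfolding C_def by auto
  also have "\<dots> = (\<Sum>m\<in>A - EE e. bet e m ^ (2^(j-1)) * c m)"
    by (rule heavy_tr[OF assms(2)]) (use local_eq assms in auto)
  finally show "(\<Sum>m\<in>A - EE e. bet e m ^ (2^(j-1)) * c m) = 0" by simp
qed

lemma ext_eq: "m \<in> A - EE e \<Longrightarrow> ext e y m = y m"
  unfolding A_def EE_def ext_def by auto

lemma ext_C: assumes e: "\<forall>i<l. e i < r+1"
  and h: "\<forall>j\<in>{1..h}. (\<Sum>m\<in>A - EE e. bet e m ^ (2^(j-1)) * y m) = 0"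
  shows "ext e y \<in> C"
proof -
  have loc: "\<forall>i<l. ext e y (i, e i) = (\<Sum>s\<in>{..<r+1}-{e i}. ext e y (i,s))"
    using e by (auto simp: ext_def intro!: sum.cong)
  have "\<forall>j\<in>{1..h}. (\<Sum>(i,s)\<in>{..<l} \<times> {..<r+1}. (lam i * xi s) ^ (2 ^ (j - 1)) * ext e y (i, s)) = 0"
  proof
    fix j assume j: "j \<in> {1..h}"
    have "(\<Sum>(i,s)\<in>{..<l} \<times> {..<r+1}. (lam i * xi s) ^ (2 ^ (j - 1)) * ext e y (i, s))
        = (\<Sum>m\<in>A - EE e. bet e m ^ (2^(j-1)) * ext e y m)"
      by (rule heavy_tr[OF e loc]) simp
    also have "\<dots> = (\<Sum>m\<in>A - EE e. bet e m ^ (2^(j-1)) * y m)"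
      by (rule sum.cong) (auto simp: ext_eq)
    finally show "(\<Sum>(i,s)\<in>{..<l} \<times> {..<r+1}. (lam i * xi s) ^ (2 ^ (j - 1)) * ext e y (i, s)) = 0"
      using h j by simp
  qed
  moreover have "\<forall>i<l. (\<Sum>s<r+1. ext e y (i, s)) = 0"
  proof (intro allI impI)
    fix i assume i: "i < l"
    have "(\<Sum>s<r+1. ext e y (i, s)) = ext e y (i, e i) + (\<Sum>s\<in>{..<r+1}-{e i}. ext e y (i, s))"
      by (rule sum.remove) (use e i in auto)
    also have "\<dots> = 0" using loc i c2_add_self[OF c2] by simp
    finally show "(\<Sum>s<r+1. ext e y (i, s)) = 0" .
  qed
  moreover have "\<forall>p. p \<notin> {..<l} \<times> {..<r+1} \<longrightarrow> ext e y p = 0"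
    by (auto simp: ext_def)
  ultimately show ?thesis unfolding C_def by blast
qed

lemma beta_ind:
  assumes e: "\<forall>i<l. e i < r+1" and T: "T \<subseteq> A - EE e" "T \<noteq> {}" "card T \<le> h"
  shows "sum (bet e) T \<noteq> 0"
proof
  assume s0: "sum (bet e) T = 0"
  have finT: "finite T" using T(1) finA finite_subset by blast
  define I where "I = fst ` T"
  define Ti where "Ti i = {s. (i,s) \<in> T}" for i
  define \<kappa> where "\<kappa> i = (\<Sum>s\<in>Ti i. xi s + xi (e i))" for i
  have TS: "T = Sigma I Ti" unfolding I_def Ti_def by force
  have finI: "finite I" unfolding I_def using finT by simp
  have IL: "I \<subseteq> {..<l}" using T(1) unfolding I_def A_def by auto
  have TiR: "Ti i \<subseteq> {..<r+1} - {e i}" if "i \<in> I" for i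
    using T(1) that IL unfolding Ti_def A_def EE_def by auto
  have finTi: "\<forall>i\<in>I. finite (Ti i)" using TiR finite_subset by (metis finite_Diff finite_lessThan)
  have "sum (bet e) T = (\<Sum>i\<in>I. \<Sum>s\<in>Ti i. bet e (i,s))"
    unfolding TS using sum.Sigma[OF finI finTi, of "\<lambda>i s. bet e (i,s)"] by (simp add: split_def)
  also have "\<dots> = (\<Sum>i\<in>I. \<kappa> i * lam i)"
    unfolding \<kappa>_def bet_def by (simp add: sum_distrib_left mult.commute)
  finally have sum0: "(\<Sum>i\<in>I. \<kappa> i * lam i) = 0" using s0 by simp
  have \<kappa>K: "\<kappa> i \<in> K" if "i \<in> I" for i
    unfolding \<kappa>_def
  proof (rule subfield_sum[OF subf], rule ballI)
    fix s assume "s \<in> Ti i"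
    hence "s < r+1" "e i < r+1" using TiR[OF that] e IL that by auto
    thus "xi s + xi (e i) \<in> K" using xiK subf unfolding is_subfield_def by auto
  qed
  have cI: "card I \<le> card T" unfolding I_def by (rule card_image_le[OF finT])
  have injI: "inj_on lam I" using laminj IL inj_on_subset by blast
  have li: "lin_indep_over K (lam ` I)"
    using lind IL cI T(3) card_image_le[OF finI, of lam] unfolding t_wise_indep_over_def
    by (meson image_mono order.trans)
  define cf where "cf x = \<kappa> (the_inv_into I lam x)" for x
  have cfK: "\<forall>x\<in>lam ` I. cf x \<in> K" by (auto simp: cf_def the_inv_into_f_f[OF injI] \<kappa>K)
  have "(\<Sum>x\<in>lam ` I. cf x * x) = (\<Sum>i\<in>I. \<kappa> i * lam i)"
    by (simp add: sum.reindex[OF injI] cf_def the_inv_into_f_f[OF injI])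
  hence "\<forall>x\<in>lam ` I. cf x = 0" using li cfK sum0 unfolding lin_indep_over_def by auto
  hence k0: "\<forall>i\<in>I. \<kappa> i = 0" by (auto simp: cf_def the_inv_into_f_f[OF injI])
  obtain i0 s0 where is0: "(i0,s0) \<in> T" using T(2) by auto
  have i0I: "i0 \<in> I" using is0 unfolding I_def by force
  define U where "U = Ti i0"
  have s0U: "s0 \<in> U" using is0 unfolding U_def Ti_def by simp
  have finU: "finite U" using finTi i0I U_def by simp
  have UR: "U \<subseteq> {..<r+1} - {e i0}" using TiR[OF i0I] U_def by simp
  have ei0: "e i0 < r+1" using e IL i0I by auto
  have "card U = card ((\<lambda>s. (i0,s)) ` U)" by (rule card_image[symmetric]) (auto intro: inj_onI)
  also have "\<dots> \<le> card T" by (rule card_mono[OF finT]) (auto simp: U_def Ti_def)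
  finally have cU: "card U \<le> h" using T(3) by simp
  have cU1: "card U \<ge> 1" using s0U finU by (metis One_nat_def Suc_leI card_gt_0_iff empty_iff)
  have kap: "\<kappa> i0 = sum xi U + of_nat (card U) * xi (e i0)"
    unfolding \<kappa>_def U_def by (simp add: sum.distrib)
  have wiD: "\<And>W. W \<subseteq> {..<r+1} \<Longrightarrow> 2 \<le> card W \<Longrightarrow> card W \<le> (if even h then h else h+1) \<Longrightarrow> sum xi W \<noteq> 0"
  proof -
    fix W assume W: "W \<subseteq> {..<r+1}" "2 \<le> card W" "card W \<le> (if even h then h else h+1)"
    have injW: "inj_on xi W" using xinj W(1) inj_on_subset by blast
    have "card (xi ` W) = card W" using card_image[OF injW] .
    hence "(\<Sum>x\<in>xi ` W. x) \<noteq> 0" using wi W unfolding weakly_indep_def by (metis image_mono)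
    thus "sum xi W \<noteq> 0" by (simp add: sum.reindex[OF injW])
  qed
  show False
  proof (cases "even (card U)")
    case True
    hence "sum xi U = 0" using k0 i0I kap c2_of_nat[OF c2, of "card U"] by simp
    moreover have "2 \<le> card U" using True cU1 by presburger
    moreover have "card U \<le> (if even h then h else h+1)" using cU by simp
    ultimately show False using wiD UR by blast
  next
    case False
    define W where "W = insert (e i0) U"
    have "e i0 \<notin> U" using UR by auto
    hence cW: "card W = Suc (card U)" and sW: "sum xi W = xi (e i0) + sum xi U"
      unfolding W_def using finU by simp_all
    have "sum xi W = \<kappa> i0" unfolding sW kap using False c2_of_nat[OF c2, of "card U"] by simp
    hence "sum xi W = 0" using k0 i0I by simp
    moreover have "2 \<le> card W" using cW cU1 by simp
    moreover have "card W \<le> (if even h then h else h+1)"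
    proof (cases "even h")
      case True
      hence "card U \<noteq> h" using False by auto
      thus ?thesis using True cU cW by simp
    qed (use cW cU in simp)
    moreover have "W \<subseteq> {..<r+1}" using UR ei0 unfolding W_def by auto
    ultimately show False using wiD by blast
  qed
qed

lemma key:
  assumes e: "\<forall>i<l. e i < r+1" and c: "c \<in> C" and cS: "card {m \<in> A - EE e. c m \<noteq> 0} \<le> h"
  shows "\<forall>m\<in>A - EE e. c m = 0"
proof -
  define S where "S = {m \<in> A - EE e. c m \<noteq> 0}"
  have finB: "finite (A - EE e)" using finA by simp
  have finS: "finite S" by (rule finite_subset[OF _ finB]) (auto simp: S_def)
  have ind: "\<forall>T\<subseteq>S. T \<noteq> {} \<longrightarrow> sum (bet e) T \<noteq> 0"
  proof (intro allI impI)
    fix T assume T: "T \<subseteq> S" "T \<noteq> {}"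
    have "card T \<le> card S" using T by (intro card_mono[OF finS]) simp
    hence cT: "card T \<le> h" using cS S_def by simp
    have "T \<subseteq> A - EE e" using T S_def by auto
    thus "sum (bet e) T \<noteq> 0" using beta_ind[OF e _ _ cT] T by blast
  qed
  have eq: "\<forall>j\<in>{1..h}. (\<Sum>m\<in>S. bet e m ^ (2^(j-1)) * c m) = 0"
  proof
    fix j assume j: "j \<in> {1..h}"
    have "(\<Sum>m\<in>S. bet e m ^ (2^(j-1)) * c m) = (\<Sum>m\<in>A - EE e. bet e m ^ (2^(j-1)) * c m)"
      by (rule sum.mono_neutral_left[OF finB]) (auto simp: S_def)
    thus "(\<Sum>m\<in>S. bet e m ^ (2^(j-1)) * c m) = 0" using C_heavy[OF c e] j by simp
  qed
  have "\<forall>m\<in>S. c m = 0" using moore[OF c2 finS _ ind eq] cS S_def by simp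
  thus ?thesis unfolding S_def by auto
qed


definition punct :: "(nat \<times> nat) set \<Rightarrow> (nat \<times> nat \<Rightarrow> 'f) \<Rightarrow> nat \<times> nat \<Rightarrow> 'f" where
  "punct E c = (\<lambda>j. if j \<in> E then 0 else c j)"

lemma punct_eq: "puncture C E = punct E ` C" unfolding puncture_def punct_def ..

lemma C_out: assumes "c \<in> C" "j \<notin> A" shows "c j = 0" using assms unfolding C_alt by blast

lemma mds:
  assumes e: "\<forall>i<l. e i < r+1"
  shows "\<exists>D. D \<subseteq> A - EE e \<and> card D = k \<and> systematic (puncture C (EE e)) D \<and>
           mds_code (puncture C (EE e)) (A - EE e) (k+h) k"
proof -
  define E where "E = EE e"
  define B where "B = A - E"
  define P where "P = puncture C E"
  have EA: "E \<subseteq> A" unfolding E_def EE_def A_def using e by auto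
  have cardE: "card E = l" unfolding E_def EE_def by (subst card_image) (auto intro: inj_onI)
  have cardA: "card A = l*(r+1)" unfolding A_def by (simp add: card_cartesian_product)
  have cardB: "card B = k+h" unfolding B_def using card_Diff_subset[OF finite_subset[OF EA finA] EA] cardA cardE lr
    by (simp add: algebra_simps)
  have finB: "finite B" unfolding B_def using finA by simp
  have Pmem: "p \<in> P \<longleftrightarrow> (\<exists>c\<in>C. p = punct E c)" for p unfolding P_def punct_eq by auto
  have pB: "c \<in> C \<Longrightarrow> m \<in> B \<Longrightarrow> punct E c m = c m" for c m unfolding B_def punct_def by auto
  have zero_out: "c \<in> C \<Longrightarrow> \<forall>m\<in>B. c m = 0 \<Longrightarrow> punct E c = (\<lambda>_. 0)" for c
    unfolding punct_def B_def using C_out by fastforce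
  have lin: "lin_code P B"
    unfolding lin_code_def
  proof (intro conjI ballI allI impI)
    show "finite B" by (rule finB)
  next
    fix p j assume "p \<in> P" "j \<notin> B"
    then obtain c where "c \<in> C" "p = punct E c" using Pmem by blast
    thus "p j = 0" using \<open>j \<notin> B\<close> C_out[of c j] unfolding punct_def B_def by auto
  next
    have "punct E (\<lambda>_. 0) = (\<lambda>_. 0)" unfolding punct_def by auto
    thus "(\<lambda>_. 0) \<in> P" using Pmem C_zero by metis
  next
    fix p d assume "p \<in> P" "d \<in> P"
    then obtain c c' where "c \<in> C" "p = punct E c" "c' \<in> C" "d = punct E c'" using Pmem by blast
    moreover have "(\<lambda>j. punct E c j + punct E c' j) = punct E (\<lambda>j. c j + c' j)" unfolding punct_def by auto
    ultimately show "(\<lambda>j. p j + d j) \<in> P" using Pmem C_add by metis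
  next
    fix a p assume "p \<in> P"
    then obtain c where "c \<in> C" "p = punct E c" using Pmem by blast
    moreover have "(\<lambda>j. a * punct E c j) = punct E (\<lambda>j. a * c j)" unfolding punct_def by auto
    ultimately show "(\<lambda>j. a * p j) \<in> P" using Pmem C_smult by metis
  qed
  have wt: "h+1 \<le> weight B p" if pp: "p \<in> P" "p \<noteq> (\<lambda>_. 0)" for p
  proof (rule ccontr)
    assume "\<not> h+1 \<le> weight B p"
    obtain c where c: "c \<in> C" "p = punct E c" using pp(1) Pmem[of p] by blast
    have "{m \<in> B. p m \<noteq> 0} = {m \<in> A - EE e. c m \<noteq> 0}" using pB c unfolding B_def E_def by auto
    hence "card {m \<in> A - EE e. c m \<noteq> 0} \<le> h" using \<open>\<not> h+1 \<le> weight B p\<close> unfolding weight_def by simp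
    from key[OF e c(1) this] have "p = (\<lambda>_. 0)" using zero_out c unfolding B_def E_def by simp
    thus False using pp by simp
  qed
  obtain D where D: "D \<subseteq> B" "card D = k" "finite D"
    using obtain_subset_with_card_n[of k B] cardB by auto
  define R where "R = B - D"
  have cardR: "card R = h" unfolding R_def using card_Diff_subset[OF D(3) D(1)] cardB D(2) by simp
  have finR: "finite R" unfolding R_def using finB by simp
  have RB: "R \<subseteq> B" unfolding R_def by auto
  have uniq: "p = p'" if pp: "p \<in> P" "p' \<in> P" "\<forall>j\<in>D. p j = p' j" for p p'
  proof -
    obtain c c' where c: "c \<in> C" "p = punct E c" "c' \<in> C" "p' = punct E c'" using pp(1,2) Pmem[of p] Pmem[of p'] by metis
    define d where "d = (\<lambda>j. c j - c' j)"
    have dC: "d \<in> C" unfolding d_def by (rule C_diff[OF c(1) c(3)])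
    have "{m \<in> A - EE e. d m \<noteq> 0} \<subseteq> R"
      using pp(3) pB c unfolding R_def B_def E_def d_def by fastforce
    hence "card {m \<in> A - EE e. d m \<noteq> 0} \<le> h" using card_mono[OF finR] cardR by fastforce
    from key[OF e dC this] have "\<forall>m\<in>B. c m = c' m" unfolding d_def B_def E_def by simp
    thus ?thesis unfolding c punct_def B_def using C_out[OF c(1)] C_out[OF c(3)] by fastforce
  qed
  have ex: "\<exists>p\<in>P. \<forall>j\<in>D. p j = v j" for v
  proof -
    define q where "q j = (2::nat)^(j-1)" for j
    define X where "X = (R \<rightarrow>\<^sub>E (UNIV::'f set))"
    define Y where "Y = ({1..h} \<rightarrow>\<^sub>E (UNIV::'f set))"
    define \<Psi> where "\<Psi> y = restrict (\<lambda>j. \<Sum>m\<in>R. bet e m ^ q j * y m) {1..h}" for y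
    have indR: "\<forall>T\<subseteq>R. T \<noteq> {} \<longrightarrow> sum (bet e) T \<noteq> 0"
    proof (intro allI impI)
      fix T assume T: "T \<subseteq> R" "T \<noteq> {}"
      hence "card T \<le> h" using card_mono[OF finR] cardR by fastforce
      thus "sum (bet e) T \<noteq> 0" using beta_ind[OF e] T RB unfolding B_def E_def by blast
    qed
    have inj: "inj_on \<Psi> X"
    proof (rule inj_onI)
      fix y y' assume yX: "y \<in> X" and y'X: "y' \<in> X" and eq: "\<Psi> y = \<Psi> y'"
      have "\<forall>j\<in>{1..h}. (\<Sum>m\<in>R. bet e m ^ (2^(j-1)) * (y m - y' m)) = 0"
      proof
        fix j assume j: "j \<in> {1..h}"
        have "\<Psi> y j = \<Psi> y' j" using eq by simp
        hence "(\<Sum>m\<in>R. bet e m ^ q j * y m) = (\<Sum>m\<in>R. bet e m ^ q j * y' m)" using j unfolding \<Psi>_def by simp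
        thus "(\<Sum>m\<in>R. bet e m ^ (2^(j-1)) * (y m - y' m)) = 0"
          unfolding q_def by (simp add: right_diff_distrib sum_subtractf)
      qed
      from moore[OF c2 finR _ indR this] cardR have "\<forall>m\<in>R. y m = y' m" by simp
      thus "y = y'" using yX y'X unfolding X_def by (intro PiE_ext) auto
    qed
    have XY: "\<Psi> ` X \<subseteq> Y" unfolding \<Psi>_def Y_def by auto
    have cXY: "card X = card Y" unfolding X_def Y_def using finR cardR by (simp add: card_PiE)
    have finY: "finite Y" unfolding Y_def by (intro finite_PiE) auto
    have surj: "\<Psi> ` X = Y"
      by (rule card_subset_eq[OF finY XY]) (simp add: card_image[OF inj] cXY)
    define w where "w = restrict (\<lambda>j. - (\<Sum>m\<in>D. bet e m ^ q j * v m)) {1..h}"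
    have "w \<in> Y" unfolding w_def Y_def by auto
    then obtain y where yX: "y \<in> X" and yw: "\<Psi> y = w" using surj by (metis imageE)
    define yy where "yy m = (if m \<in> D then v m else y m)" for m
    have BDR: "B = D \<union> R" "D \<inter> R = {}" unfolding R_def using D(1) by auto
    have heavy: "\<forall>j\<in>{1..h}. (\<Sum>m\<in>A - EE e. bet e m ^ (2^(j-1)) * yy m) = 0"
    proof
      fix j assume j: "j \<in> {1..h}"
      have "(\<Sum>m\<in>A - EE e. bet e m ^ (2^(j-1)) * yy m)
          = (\<Sum>m\<in>D. bet e m ^ q j * yy m) + (\<Sum>m\<in>R. bet e m ^ q j * yy m)"
        unfolding q_def B_def[symmetric] E_def[symmetric] BDR(1) using D(3) finR BDR(2)
        by (rule sum.union_disjoint)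
      also have "\<dots> = (\<Sum>m\<in>D. bet e m ^ q j * v m) + (\<Sum>m\<in>R. bet e m ^ q j * y m)"
        using BDR(2) unfolding yy_def by (auto intro!: sum.cong)
      also have "(\<Sum>m\<in>R. bet e m ^ q j * y m) = w j" using yw j unfolding \<Psi>_def by auto
      also have "w j = - (\<Sum>m\<in>D. bet e m ^ q j * v m)" using j unfolding w_def by simp
      finally show "(\<Sum>m\<in>A - EE e. bet e m ^ (2^(j-1)) * yy m) = 0" by simp
    qed
    have cC: "ext e yy \<in> C" by (rule ext_C[OF e heavy])
    have "\<forall>j\<in>D. punct E (ext e yy) j = v j"
      using D(1) ext_eq[of _ e yy] pB[OF cC] unfolding yy_def B_def E_def by auto
    thus ?thesis using Pmem cC by blast
  qed
  have sys: "systematic P D" unfolding systematic_def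
  proof
    fix v
    obtain p where "p \<in> P" "\<forall>j\<in>D. p j = v j" using ex by blast
    thus "\<exists>!p. p \<in> P \<and> (\<forall>j\<in>D. p j = v j)" using uniq by (metis (no_types, lifting))
  qed
  have md: "min_dist_is P B (k + h - k + 1)"
    unfolding min_dist_is_def
  proof (intro conjI ballI impI)
    fix p assume "p \<in> P" "p \<noteq> (\<lambda>_. 0)"
    thus "k + h - k + 1 \<le> weight B p" using wt by simp
  next
    have "D \<noteq> {}" using D(2) kpos by (metis card.empty less_irrefl)
    then obtain d0 where d0: "d0 \<in> D" by blast
    obtain p where p: "p \<in> P" "\<forall>j\<in>D. p j = (if j = d0 then 1 else 0)"
      using ex[of "\<lambda>j. if j = d0 then 1 else 0"] by blast
    have nz: "p \<noteq> (\<lambda>_. 0)" using p(2) d0 by (metis one_neq_zero)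
    have "{m \<in> B. p m \<noteq> 0} \<subseteq> insert d0 R" using p(2) unfolding R_def by auto
    hence "weight B p \<le> h + 1" unfolding weight_def using card_mono[of "insert d0 R"] finR cardR card_insert_le
      by (metis (no_types, lifting) Suc_eq_plus1 card_insert_if finite_insert le_SucI le_trans)
    hence "weight B p = k + h - k + 1" using wt[OF p(1) nz] by simp
    thus "\<exists>c\<in>P. c \<noteq> (\<lambda>_. 0) \<and> weight B c = k + h - k + 1" using p(1) nz by blast
  qed
  have "mds_code P B (k+h) k" unfolding mds_code_def using lin cardB D sys md by blast
  thus ?thesis using D sys unfolding P_def B_def E_def by blast
qed


lemma final: "max_recoverable C A (\<lambda>i. {i} \<times> {..<r+1}) l k r h"
proof -
  define G where "G = (\<lambda>i::nat. {i} \<times> {..<r+1})"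
  have lin: "lin_code C A" unfolding lin_code_def
    using finA C_out C_zero C_add C_smult by blast
  have AU: "A = (\<Union>i<l. G i)" unfolding A_def G_def by auto
  have cardA: "card A = k + h + l" unfolding A_def using lr by (simp add: card_cartesian_product algebra_simps)
  have disj: "\<forall>i<l. \<forall>i'<l. i \<noteq> i' \<longrightarrow> G i \<inter> G i' = {}" unfolding G_def by auto
  have cardG: "\<forall>i<l. card (G i) = r + 1" unfolding G_def by (simp add: card_cartesian_product)
  define e0 where "e0 = (\<lambda>i::nat. 0::nat)"
  have e0: "\<forall>i<l. e0 i < r+1" unfolding e0_def by simp
  define pp where "pp = (\<lambda>i::nat. (i, 0::nat))"
  have Epp: "EE e0 = pp ` {..<l}" unfolding EE_def e0_def pp_def ..
  obtain D where D: "D \<subseteq> A - EE e0" "card D = k" "systematic (puncture C (EE e0)) D"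
    using mds[OF e0] by blast
  have sysC: "systematic C D" unfolding systematic_def
  proof
    fix v
    from D(3) obtain p where p: "p \<in> puncture C (EE e0)" "\<forall>j\<in>D. p j = v j"
      and pu: "\<And>p'. p' \<in> puncture C (EE e0) \<Longrightarrow> \<forall>j\<in>D. p' j = v j \<Longrightarrow> p' = p"
      unfolding systematic_def by metis
    from p(1) obtain c where c: "c \<in> C" "p = punct (EE e0) c" unfolding punct_eq by auto
    have cv: "\<forall>j\<in>D. c j = v j"
    proof
      fix j assume j: "j \<in> D"
      hence "j \<notin> EE e0" using D(1) by blast
      moreover have "p j = v j" using p(2) j by blast
      ultimately show "c j = v j" using c(2) by (simp add: punct_def)
    qed
    show "\<exists>!c. c \<in> C \<and> (\<forall>j\<in>D. c j = v j)"
    proof (rule ex1I[of _ c])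
      show "c \<in> C \<and> (\<forall>j\<in>D. c j = v j)" using c cv by simp
    next
      fix c' assume c': "c' \<in> C \<and> (\<forall>j\<in>D. c' j = v j)"
      have "punct (EE e0) c' \<in> puncture C (EE e0)" using c' unfolding punct_eq by auto
      moreover have "\<forall>j\<in>D. punct (EE e0) c' j = v j"
      proof
        fix j assume j: "j \<in> D"
        hence "j \<notin> EE e0" using D(1) by blast
        thus "punct (EE e0) c' j = v j" using c' j unfolding punct_def by simp
      qed
      ultimately have "punct (EE e0) c' = punct (EE e0) c" using pu c(2) by simp
      hence eqo: "\<forall>j. j \<notin> EE e0 \<longrightarrow> c' j = c j" unfolding punct_def by (metis)
      show "c' = c"
      proof
        fix j show "c' j = c j"
        proof (cases "j \<in> EE e0")
          case False thus ?thesis using eqo by blast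
        next
          case True
          then obtain i where i: "i < l" "j = (i, 0)" unfolding EE_def e0_def by auto
          have "c' (i, e0 i) = (\<Sum>s\<in>{..<r+1}-{e0 i}. c' (i,s))" using local_eq[OF conjunct1[OF c'] i(1)] e0 i by simp
          also have "\<dots> = (\<Sum>s\<in>{..<r+1}-{e0 i}. c (i,s))"
          proof (rule sum.cong[OF refl])
            fix s assume "s \<in> {..<r+1} - {e0 i}"
            hence "(i,s) \<notin> EE e0" unfolding EE_def e0_def by auto
            thus "c' (i,s) = c (i,s)" using eqo by blast
          qed
          also have "\<dots> = c (i, e0 i)" using local_eq[OF c(1) i(1)] e0 i by simp
          finally show ?thesis using i e0_def by simp
        qed
      qed
    qed
  qed
  have par: "\<forall>c\<in>C. \<forall>i<l. c (pp i) = (\<Sum>j\<in>G i - {pp i}. c j)"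
  proof (intro ballI allI impI)
    fix c i assume c: "c \<in> C" and i: "i < l"
    have "G i - {pp i} = (\<lambda>s. (i,s)) ` ({..<r+1} - {e0 i})" unfolding G_def pp_def e0_def by auto
    hence "(\<Sum>j\<in>G i - {pp i}. c j) = (\<Sum>s\<in>{..<r+1} - {e0 i}. c (i,s))"
      by (simp add: sum.reindex inj_on_def)
    also have "\<dots> = c (i, e0 i)" using local_eq[OF c i] e0 i by simp
    finally show "c (pp i) = (\<Sum>j\<in>G i - {pp i}. c j)" unfolding pp_def e0_def by simp
  qed
  have loc: "local_code C A G l k r h" unfolding local_code_def
    using lin AU cardA disj cardG D(1,2) sysC par Epp
    by (intro conjI exI[of _ pp] exI[of _ D]) (auto simp: pp_def G_def)
  have mr: "\<forall>E. E \<subseteq> A \<and> (\<forall>i<l. card (E \<inter> G i) = 1) \<longrightarrow>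
        mds_code (puncture C E) (A - E) (k + h) k"
  proof (intro allI impI)
    fix E assume E: "E \<subseteq> A \<and> (\<forall>i<l. card (E \<inter> G i) = 1)"
    have "\<forall>i\<in>{..<l}. \<exists>s. E \<inter> G i = {(i,s)}"
    proof
      fix i assume "i \<in> {..<l}"
      hence "card (E \<inter> G i) = 1" using E by simp
      then obtain z where z: "E \<inter> G i = {z}" by (rule card_1_singletonE)
      hence "z \<in> G i" by auto
      hence "z = (i, snd z)" unfolding G_def by auto
      thus "\<exists>s. E \<inter> G i = {(i,s)}" using z by metis
    qed
    then obtain e where e: "\<forall>i\<in>{..<l}. E \<inter> G i = {(i, e i)}" by (metis bchoice)
    have el: "\<forall>i<l. e i < r+1"
    proof (intro allI impI)
      fix i assume "i < l"
      hence "(i, e i) \<in> G i" using e by blast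
      thus "e i < r+1" unfolding G_def by auto
    qed
    have "E = EE e"
    proof
      show "E \<subseteq> EE e"
      proof
        fix z assume z: "z \<in> E"
        then obtain i s where iss: "z = (i,s)" "i < l" "s < r+1" using E unfolding A_def by auto
        hence "z \<in> E \<inter> G i" using z unfolding G_def by auto
        hence "z = (i, e i)" using e iss(2) by auto
        thus "z \<in> EE e" using iss(2) unfolding EE_def by auto
      qed
    next
      show "EE e \<subseteq> E" unfolding EE_def using e by auto
    qed
    thus "mds_code (puncture C E) (A - E) (k + h) k" using mds[OF el] by blast
  qed
  show ?thesis unfolding max_recoverable_def G_def[symmetric] using loc mr by blast
qed


end

theorem proposition14:
  fixes k r h l a b :: nat
    and K :: "'f::{field,finite} set"
    and xi lam :: "nat \<Rightarrow> 'f"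
  assumes "k > 0" "r > 0" "h > 0"
    and "l * r = k + h"
    and "a > 0" "b > 0"
    and "card (UNIV :: 'f set) = 2 ^ b"
    and "is_subfield K" "card K = 2 ^ a"
    and "\<forall>s<r+1. xi s \<in> K" "inj_on xi {..<r+1}"
    and "weakly_indep (xi ` {..<r+1}) (if even h then h else h + 1)"
    and "inj_on lam {..<l}"
    and "t_wise_indep_over K (lam ` {..<l}) h"
  shows "max_recoverable
     {x :: nat \<times> nat \<Rightarrow> 'f.
        (\<forall>p. p \<notin> {..<l} \<times> {..<r+1} \<longrightarrow> x p = 0) \<and>
        (\<forall>j\<in>{1..h}. (\<Sum>(i,s)\<in>{..<l} \<times> {..<r+1}. (lam i * xi s) ^ (2 ^ (j - 1)) * x (i, s)) = 0) \<and>
        (\<forall>i<l. (\<Sum>s<r+1. x (i, s)) = 0)}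
     ({..<l} \<times> {..<r+1}) (\<lambda>i. {i} \<times> {..<r+1}) l k r h"
proof -
  have c2: "(1::'f) + 1 = 0" by (rule char2[OF assms(7)])
  interpret mrc k r h l K xi lam
    by (unfold_locales) (use assms c2 in auto)
  show ?thesis using final unfolding C_def A_def .
qed

end
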